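(* Let $\Delta\geq2$ be an integer and $n\geq2\Delta^4$, and let $G$ be a graph on $n$ vertices with $\Delta(G)\leq\Delta$. Then there exists a graph $\bar G$ with $V(\bar G)=V(G)$ and $E(\bar G)\supseteq E(G)$ such that $d_{\bar G}(v)\in\{\Delta,\Delta+1\}$ for every vertex $v$ and $\Delta_2(\bar G)\leq\max\{\Delta_2(G),1\}$.
   Context: $\Delta(G)$ is the maximum degree; $\Delta_2(G)$ is the maximum over distinct vertex pairs of the number of common neighbours. *)

theory Defs
  imports Main
begin

definition sgraph :: "'a set \<Rightarrow> 'a set set \<Rightarrow> bool" where
  "sgraph V E \<longleftrightarrow> finite V \<and> (\<forall>e\<in>E. e \<subseteq> V \<and> card e = 2)"

definition nbhd :: "'a set set \<Rightarrow> 'a \<Rightarrow> 'a set" where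
  "nbhd E v = {u. {u, v} \<in> E}"

definition degree :: "'a set set \<Rightarrow> 'a \<Rightarrow> nat" where
  "degree E v = card (nbhd E v)"

definition max_degree :: "'a set \<Rightarrow> 'a set set \<Rightarrow> nat" where
  "max_degree V E = Max (insert 0 (degree E ` V))"

definition max_codegree :: "'a set \<Rightarrow> 'a set set \<Rightarrow> nat" where
  "max_codegree V E =
     Max (insert 0 {card (nbhd E u \<inter> nbhd E v) | u v. u \<in> V \<and> v \<in> V \<and> u \<noteq> v})"

end

theory Submission
  imports Defs
begin

lemma nb_sub: "sgraph V E \<Longrightarrow> nbhd E x \<subseteq> V"
  unfolding sgraph_def nbhd_def by auto

lemma nb_fin: "sgraph V E \<Longrightarrow> finite (nbhd E x)"
  using nb_sub finite_subset unfolding sgraph_def by metis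

lemma nb_empty: "sgraph V E \<Longrightarrow> x \<notin> V \<Longrightarrow> nbhd E x = {}"
  unfolding sgraph_def nbhd_def by auto

lemma nb_loop: "sgraph V E \<Longrightarrow> x \<notin> nbhd E x"
  unfolding sgraph_def nbhd_def by fastforce

lemma nb_sym: "u \<in> nbhd E x \<longleftrightarrow> x \<in> nbhd E u"
  unfolding nbhd_def by (simp add: insert_commute)

lemma sg_ins: "sgraph V E \<Longrightarrow> u \<in> V \<Longrightarrow> v \<in> V \<Longrightarrow> u \<noteq> v \<Longrightarrow> sgraph V (insert {u,v} E)"
  unfolding sgraph_def by auto

lemma nb_ins: "u \<noteq> v \<Longrightarrow> nbhd (insert {u,v} E) x =
   nbhd E x \<union> (if x = u then {v} else {}) \<union> (if x = v then {u} else {})"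
  unfolding nbhd_def by (auto simp: doubleton_eq_iff)

definition SS :: "'a set set \<Rightarrow> 'a \<Rightarrow> 'a set" where
  "SS E u = insert u (nbhd E u \<union> (\<Union>a\<in>nbhd E u. \<Union>w\<in>nbhd E a - {u}. nbhd E w))"

lemma cod_u:
  assumes sg: "sgraph V E" and uv: "u \<noteq> v" and vS: "v \<notin> SS E u"
    and y: "y \<noteq> u" "y \<noteq> v" and c: "c \<ge> 1"
    and cod: "card (nbhd E u \<inter> nbhd E y) \<le> c"
  shows "card (nbhd (insert {u,v} E) u \<inter> nbhd (insert {u,v} E) y) \<le> c"
proof (cases "v \<in> nbhd E y")
  case True
  have "nbhd E u \<inter> nbhd E y = {}"
  proof (rule ccontr)
    assume "nbhd E u \<inter> nbhd E y \<noteq> {}"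
    then obtain a where a: "a \<in> nbhd E u" "a \<in> nbhd E y" by blast
    then have "y \<in> nbhd E a - {u}" using y nb_sym by fast
    then have "v \<in> SS E u" using a True unfolding SS_def by blast
    then show False using vS by simp
  qed
  then have "nbhd (insert {u,v} E) u \<inter> nbhd (insert {u,v} E) y = {v}"
    using True uv y by (auto simp: nb_ins)
  then show ?thesis using c by simp
next
  case False
  then have "nbhd (insert {u,v} E) u \<inter> nbhd (insert {u,v} E) y = nbhd E u \<inter> nbhd E y"
    using uv y by (auto simp: nb_ins)
  then show ?thesis using cod by simp
qed

lemma cod_v:
  assumes sg: "sgraph V E" and uv: "u \<noteq> v" and vS: "v \<notin> SS E u"
    and y: "y \<noteq> u" "y \<noteq> v" and c: "c \<ge> 1"
    and cod: "card (nbhd E v \<inter> nbhd E y) \<le> c"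
  shows "card (nbhd (insert {u,v} E) v \<inter> nbhd (insert {u,v} E) y) \<le> c"
proof (cases "u \<in> nbhd E y")
  case True
  have "nbhd E v \<inter> nbhd E y = {}"
  proof (rule ccontr)
    assume "nbhd E v \<inter> nbhd E y \<noteq> {}"
    then obtain b where b: "b \<in> nbhd E v" "b \<in> nbhd E y" by blast
    have yu: "y \<in> nbhd E u" using True nb_sym by fast
    have "b \<noteq> u"
    proof
      assume "b = u"
      then have "v \<in> nbhd E u" using b nb_sym by fast
      then show False using vS unfolding SS_def by blast
    qed
    then have "b \<in> nbhd E y - {u}" using b by blast
    moreover have "v \<in> nbhd E b" using b nb_sym by fast
    ultimately have "v \<in> SS E u" using yu unfolding SS_def by blast
    then show False using vS by simp
  qed
  then have "nbhd (insert {u,v} E) v \<inter> nbhd (insert {u,v} E) y = {u}"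
    using True uv y by (auto simp: nb_ins)
  then show ?thesis using c by simp
next
  case False
  then have "nbhd (insert {u,v} E) v \<inter> nbhd (insert {u,v} E) y = nbhd E v \<inter> nbhd E y"
    using uv y by (auto simp: nb_ins)
  then show ?thesis using cod by simp
qed

lemma cod_all:
  assumes sg: "sgraph V E" and uv: "u \<noteq> v" and vS: "v \<notin> SS E u" and c: "c \<ge> 1"
    and cod: "\<forall>x\<in>V. \<forall>y\<in>V. x \<noteq> y \<longrightarrow> card (nbhd E x \<inter> nbhd E y) \<le> c"
    and u: "u \<in> V" and v: "v \<in> V"
  shows "\<forall>x\<in>V. \<forall>y\<in>V. x \<noteq> y \<longrightarrow> card (nbhd (insert {u,v} E) x \<inter> nbhd (insert {u,v} E) y) \<le> c"
proof (intro ballI impI)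
  fix x y assume x: "x \<in> V" and y: "y \<in> V" and xy: "x \<noteq> y"
  let ?N = "nbhd (insert {u,v} E)"
  show "card (?N x \<inter> ?N y) \<le> c"
  proof (cases "x \<in> {u,v} \<or> y \<in> {u,v}")
    case False
    then have "?N x = nbhd E x" "?N y = nbhd E y" using uv by (auto simp: nb_ins)
    then show ?thesis using cod x y xy by simp
  next
    case True
    have uvN: "?N u \<inter> ?N v = nbhd E u \<inter> nbhd E v"
      using uv nb_loop[OF sg, of u] nb_loop[OF sg, of v] by (auto simp: nb_ins)
    show ?thesis
    proof -
      have A: "card (?N u \<inter> ?N z) \<le> c" if "z \<in> V" "z \<noteq> u" "z \<noteq> v" for z
        using cod_u[OF sg uv vS that(2,3) c] cod u that by auto
      have B: "card (?N v \<inter> ?N z) \<le> c" if "z \<in> V" "z \<noteq> u" "z \<noteq> v" for z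
        using cod_v[OF sg uv vS that(2,3) c] cod v that uv by auto
      have C: "card (?N u \<inter> ?N v) \<le> c" using uvN cod u v uv by auto
      have D: "card (?N a \<inter> ?N b) \<le> c" if "a \<in> {u,v}" "b \<in> V" "a \<noteq> b" for a b
      proof (cases "a = u")
        case True
        then show ?thesis using that A[of b] C by (cases "b = v") auto
      next
        case False
        then have "a = v" using that by auto
        then show ?thesis using that B[of b] C by (cases "b = u") (auto simp: Int_commute)
      qed
      show ?thesis
      proof (cases "x \<in> {u,v}")
        case True then show ?thesis using D y xy by blast
      next
        case False then have "y \<in> {u,v}" using \<open>x \<in> {u,v} \<or> y \<in> {u,v}\<close> by blast
        then show ?thesis using D[of y x] x xy by (simp add: Int_commute)
      qed
    qed
  qed
qed


lemma deg_le_all: "sgraph V E \<Longrightarrow> \<forall>x\<in>V. degree E x \<le> k \<Longrightarrow> degree E x \<le> k"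
  by (cases "x \<in> V") (auto simp: degree_def nb_empty)

lemma arith1: "(\<Delta>::nat) \<ge> 1 \<Longrightarrow> d \<le> \<Delta> - 1 \<Longrightarrow> Suc (d + d * (\<Delta> * (\<Delta> + 1))) \<le> \<Delta> ^ 3"
proof -
  assume a: "\<Delta> \<ge> 1" "d \<le> \<Delta> - 1"
  then obtain m where m: "\<Delta> = Suc m" by (cases \<Delta>) auto
  have "d \<le> m" using a m by simp
  then have "d * (\<Delta> * (\<Delta> + 1)) \<le> m * (\<Delta> * (\<Delta> + 1))" by simp
  moreover have "Suc (m + m * (\<Delta> * (\<Delta> + 1))) = \<Delta> ^ 3" unfolding m
    by (simp add: power3_eq_cube algebra_simps)
  ultimately show ?thesis using \<open>d \<le> m\<close> by linarith
qed

lemma card_SS: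
  assumes sg: "sgraph V E" and deg: "\<forall>x\<in>V. degree E x \<le> Suc \<Delta>"
    and du: "degree E u < \<Delta>"
  shows "card (SS E u) \<le> \<Delta> ^ 3"
proof -
  let ?N = "nbhd E"
  let ?U = "\<Union>a\<in>?N u. \<Union>w\<in>?N a - {u}. ?N w"
  have fin: "finite (?N x)" for x using nb_fin[OF sg] .
  have finU: "finite ?U" using fin by auto
  have "card (SS E u) \<le> Suc (card (?N u \<union> ?U))"
    unfolding SS_def by (simp add: card_insert_le_m1 card_insert_if)
  also have "card (?N u \<union> ?U) \<le> card (?N u) + card ?U" by (rule card_Un_le)
  also have "card ?U \<le> (\<Sum>a\<in>?N u. card (\<Union>w\<in>?N a - {u}. ?N w))"
    by (rule card_UN_le[OF fin])
  also have "\<dots> \<le> (\<Sum>a\<in>?N u. \<Delta> * (\<Delta> + 1))"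
  proof (rule sum_mono)
    fix a assume a: "a \<in> ?N u"
    have "card (\<Union>w\<in>?N a - {u}. ?N w) \<le> (\<Sum>w\<in>?N a - {u}. card (?N w))"
      by (rule card_UN_le) (use fin in auto)
    also have "\<dots> \<le> (\<Sum>w\<in>?N a - {u}. Suc \<Delta>)"
      by (rule sum_mono) (use deg_le_all[OF sg deg] in \<open>auto simp: degree_def\<close>)
    also have "\<dots> = card (?N a - {u}) * Suc \<Delta>" by simp
    also have "card (?N a - {u}) = card (?N a) - 1"
      using a nb_sym[of u E a] fin by (simp add: card_Diff_singleton)
    also have "card (?N a) - 1 \<le> \<Delta>" using deg_le_all[OF sg deg, of a] by (simp add: degree_def)
    then have "(card (?N a) - 1) * Suc \<Delta> \<le> \<Delta> * (\<Delta> + 1)"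
      using mult_le_mono1 by (metis Suc_eq_plus1)
    finally show "card (\<Union>w\<in>?N a - {u}. ?N w) \<le> \<Delta> * (\<Delta> + 1)" .
  qed
  also have "\<dots> = card (?N u) * (\<Delta> * (\<Delta> + 1))" by simp
  finally have "card (SS E u) \<le> Suc (card (?N u) + card (?N u) * (\<Delta> * (\<Delta> + 1)))" by simp
  also have "\<dots> \<le> \<Delta> ^ 3" using du by (intro arith1) (auto simp: degree_def)
  finally show ?thesis .
qed


definition defi :: "'a set \<Rightarrow> nat \<Rightarrow> 'a set set \<Rightarrow> nat" where
  "defi V \<Delta> E = (\<Sum>x\<in>V. \<Delta> - degree E x)"

definition hv :: "'a set \<Rightarrow> nat \<Rightarrow> 'a set set \<Rightarrow> 'a set" where
  "hv V \<Delta> E = {x\<in>V. degree E x = Suc \<Delta>}"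

lemma deg_ins:
  assumes sg: "sgraph V E" and uv: "u \<noteq> v" and vu: "v \<notin> nbhd E u"
  shows "degree (insert {u,v} E) x =
     (if x = u \<or> x = v then Suc (degree E x) else degree E x)"
proof -
  have uv': "u \<notin> nbhd E v" using vu nb_sym by fast
  show ?thesis
    using uv vu uv' nb_fin[OF sg]
    by (auto simp: degree_def nb_ins)
qed

lemma step_common:
  assumes sg: "sgraph V E" and fin: "finite V" and c: "c \<ge> 1"
    and deg: "\<forall>x\<in>V. degree E x \<le> Suc \<Delta>"
    and cod: "\<forall>x\<in>V. \<forall>y\<in>V. x \<noteq> y \<longrightarrow> card (nbhd E x \<inter> nbhd E y) \<le> c"
    and u: "u \<in> V" "degree E u < \<Delta>"
    and v: "v \<in> V" "v \<notin> SS E u" "degree E v \<le> \<Delta>"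
  shows "sgraph V (insert {u,v} E)"
    and "\<forall>x\<in>V. degree (insert {u,v} E) x \<le> Suc \<Delta>"
    and "\<forall>x\<in>V. \<forall>y\<in>V. x \<noteq> y \<longrightarrow> card (nbhd (insert {u,v} E) x \<inter> nbhd (insert {u,v} E) y) \<le> c"
    and "defi V \<Delta> (insert {u,v} E) < defi V \<Delta> E"
    and "hv V \<Delta> (insert {u,v} E) \<subseteq> insert v (hv V \<Delta> E)"
    and "degree E v < \<Delta> \<Longrightarrow> hv V \<Delta> (insert {u,v} E) = hv V \<Delta> E"
proof -
  have uv: "u \<noteq> v" using v(2) unfolding SS_def by auto
  have vu: "v \<notin> nbhd E u" using v(2) unfolding SS_def by auto
  note D = deg_ins[OF sg uv vu]
  show "sgraph V (insert {u,v} E)" using sg_ins[OF sg u(1) v(1) uv] .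
  show "\<forall>x\<in>V. degree (insert {u,v} E) x \<le> Suc \<Delta>" using deg u v by (auto simp: D)
  show "\<forall>x\<in>V. \<forall>y\<in>V. x \<noteq> y \<longrightarrow> card (nbhd (insert {u,v} E) x \<inter> nbhd (insert {u,v} E) y) \<le> c"
    using cod_all[OF sg uv v(2) c cod u(1) v(1)] .
  show "defi V \<Delta> (insert {u,v} E) < defi V \<Delta> E"
    unfolding defi_def
    by (rule sum_strict_mono_ex1[OF fin]) (use u uv D in \<open>auto intro!: bexI[of _ u]\<close>)
  show "hv V \<Delta> (insert {u,v} E) \<subseteq> insert v (hv V \<Delta> E)"
    using u unfolding hv_def by (auto simp: D split: if_splits)
  show "degree E v < \<Delta> \<Longrightarrow> hv V \<Delta> (insert {u,v} E) = hv V \<Delta> E"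
    using u unfolding hv_def by (auto simp: D split: if_splits)
qed


definition inv :: "'a set \<Rightarrow> nat \<Rightarrow> nat \<Rightarrow> 'a set set \<Rightarrow> bool" where
  "inv V \<Delta> c E \<longleftrightarrow> sgraph V E \<and> (\<forall>x\<in>V. degree E x \<le> Suc \<Delta>)
     \<and> (\<forall>x\<in>V. \<forall>y\<in>V. x \<noteq> y \<longrightarrow> card (nbhd E x \<inter> nbhd E y) \<le> c)
     \<and> (hv V \<Delta> E = {} \<or> card (hv V \<Delta> E) + defi V \<Delta> E \<le> \<Delta> ^ 4)"

lemma step:
  assumes D1: "\<Delta> \<ge> 1" and fin: "finite V" and c: "c \<ge> 1" and n: "card V \<ge> 2 * \<Delta> ^ 4"
    and I: "inv V \<Delta> c E" and u: "u \<in> V" "degree E u < \<Delta>"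
  shows "\<exists>E'. inv V \<Delta> c E' \<and> E \<subseteq> E' \<and> defi V \<Delta> E' < defi V \<Delta> E"
proof -
  have sg: "sgraph V E" and deg: "\<forall>x\<in>V. degree E x \<le> Suc \<Delta>"
    and cod: "\<forall>x\<in>V. \<forall>y\<in>V. x \<noteq> y \<longrightarrow> card (nbhd E x \<inter> nbhd E y) \<le> c"
    and hvi: "hv V \<Delta> E = {} \<or> card (hv V \<Delta> E) + defi V \<Delta> E \<le> \<Delta> ^ 4"
    using I unfolding inv_def by auto
  note SC = step_common[OF sg fin c deg cod u]
  have cS: "card (SS E u) \<le> \<Delta> ^ 3" using card_SS[OF sg deg u(2)] .
  have SSV: "SS E u \<subseteq> V" using u(1) nb_sub[OF sg] unfolding SS_def by blast
  have finS: "finite (SS E u)" using SSV fin finite_subset by blast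
  have finH: "finite (hv V \<Delta> E)" using fin unfolding hv_def by auto
  let ?D = "{x\<in>V. degree E x < \<Delta>}"
  show ?thesis
  proof (cases "\<exists>v\<in>?D. v \<notin> SS E u")
    case True
    then obtain v where v: "v \<in> V" "degree E v < \<Delta>" "v \<notin> SS E u" by blast
    note R = SC[OF v(1) v(3) less_imp_le[OF v(2)]]
    have H: "hv V \<Delta> (insert {u,v} E) = hv V \<Delta> E" using R(6) v(2) .
    have "hv V \<Delta> (insert {u,v} E) = {} \<or>
        card (hv V \<Delta> (insert {u,v} E)) + defi V \<Delta> (insert {u,v} E) \<le> \<Delta> ^ 4"
      using H hvi R(4) by auto
    then have "inv V \<Delta> c (insert {u,v} E)"
      unfolding inv_def using R by auto
    then show ?thesis using R by blast
  next
    case False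
    then have DS: "?D \<subseteq> SS E u" by blast
    have "defi V \<Delta> E = (\<Sum>x\<in>?D. \<Delta> - degree E x)"
      unfolding defi_def by (rule sum.mono_neutral_right) (use fin in auto)
    also have "\<dots> \<le> (\<Sum>x\<in>?D. \<Delta>)" by (rule sum_mono) auto
    also have "\<dots> = card ?D * \<Delta>" by simp
    also have "\<dots> \<le> \<Delta> ^ 3 * \<Delta>"
      using card_mono[OF finS DS] cS by (intro mult_le_mono1) simp
    also have "\<dots> = \<Delta> ^ 4" by (simp add: power_Suc2[symmetric] del: power_Suc)
    finally have dle: "defi V \<Delta> E \<le> \<Delta> ^ 4" .
    have hb: "card (hv V \<Delta> E) + defi V \<Delta> E \<le> \<Delta> ^ 4" using hvi dle by auto
    have d1: "defi V \<Delta> E \<ge> 1"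
    proof -
      have "\<Delta> - degree E u \<le> defi V \<Delta> E"
        unfolding defi_def by (rule member_le_sum) (use u fin in auto)
      then show ?thesis using u by simp
    qed
    have "\<not> V \<subseteq> SS E u \<union> hv V \<Delta> E"
    proof
      assume "V \<subseteq> SS E u \<union> hv V \<Delta> E"
      then have "card V \<le> card (SS E u \<union> hv V \<Delta> E)" using finS finH by (intro card_mono) auto
      also have "\<dots> \<le> card (SS E u) + card (hv V \<Delta> E)" by (rule card_Un_le)
      finally have "card V \<le> \<Delta> ^ 3 + card (hv V \<Delta> E)" using cS by linarith
      moreover have "\<Delta> ^ 3 \<le> \<Delta> ^ 4" using D1 by (intro power_increasing) auto
      ultimately show False using n hb d1 by linarith
    qed
    then obtain v where v: "v \<in> V" "v \<notin> SS E u" "v \<notin> hv V \<Delta> E" by blast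
    have vd: "degree E v \<le> \<Delta>" using v deg unfolding hv_def by force
    note R = SC[OF v(1) v(2) vd]
    have "card (hv V \<Delta> (insert {u,v} E)) \<le> card (insert v (hv V \<Delta> E))"
      using R(5) finH by (intro card_mono) auto
    also have "\<dots> \<le> Suc (card (hv V \<Delta> E))" using finH by (simp add: card_insert_if)
    finally have "card (hv V \<Delta> (insert {u,v} E)) + defi V \<Delta> (insert {u,v} E) \<le> \<Delta> ^ 4"
      using R(4) hb by linarith
    then have "inv V \<Delta> c (insert {u,v} E)"
      unfolding inv_def using R by auto
    then show ?thesis using R by blast
  qed
qed

lemma main:
  assumes D1: "\<Delta> \<ge> 1" and fin: "finite V" and c: "c \<ge> 1" and n: "card V \<ge> 2 * \<Delta> ^ 4"
  shows "inv V \<Delta> c E \<Longrightarrow> \<exists>E'. E \<subseteq> E' \<and> sgraph V E' \<and> (\<forall>x\<in>V. degree E' x \<in> {\<Delta>, \<Delta> + 1})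
     \<and> (\<forall>x\<in>V. \<forall>y\<in>V. x \<noteq> y \<longrightarrow> card (nbhd E' x \<inter> nbhd E' y) \<le> c)"
proof (induction "defi V \<Delta> E" arbitrary: E rule: less_induct)
  case less
  show ?case
  proof (cases "\<exists>u\<in>V. degree E u < \<Delta>")
    case True
    then obtain u where "u \<in> V" "degree E u < \<Delta>" by blast
    from step[OF D1 fin c n less.prems this] obtain E' where
      "inv V \<Delta> c E'" "E \<subseteq> E'" "defi V \<Delta> E' < defi V \<Delta> E" by blast
    with less.hyps[of E'] show ?thesis by (meson order_trans)
  next
    case False
    have "\<forall>x\<in>V. degree E x \<in> {\<Delta>, \<Delta> + 1}"
    proof
      fix x assume x: "x \<in> V"
      then have "\<Delta> \<le> degree E x" "degree E x \<le> Suc \<Delta>" using False less.prems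
        unfolding inv_def by auto
      then show "degree E x \<in> {\<Delta>, \<Delta> + 1}" by (auto simp: le_Suc_eq)
    qed
    then show ?thesis using less.prems unfolding inv_def
      by (intro exI[of _ E]) auto
  qed
qed


lemma codeg_fin: "finite V \<Longrightarrow>
  finite {card (nbhd E u \<inter> nbhd E v) | u v. u \<in> V \<and> v \<in> V \<and> u \<noteq> v}"
proof -
  assume f: "finite V"
  have "{card (nbhd E u \<inter> nbhd E v) | u v. u \<in> V \<and> v \<in> V \<and> u \<noteq> v}
     \<subseteq> (\<lambda>(u,v). card (nbhd E u \<inter> nbhd E v)) ` (V \<times> V)" by auto
  then show ?thesis using f by (meson finite_SigmaI finite_imageI finite_subset)
qed

theorem lemma4p2:
  fixes V :: "'a set" and E :: "'a set set" and \<Delta> n :: nat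
  assumes "\<Delta> \<ge> 2"
    and "n \<ge> 2 * \<Delta> ^ 4"
    and "sgraph V E"
    and "card V = n"
    and "max_degree V E \<le> \<Delta>"
  shows "\<exists>E'. sgraph V E' \<and> E \<subseteq> E'
           \<and> (\<forall>v\<in>V. degree E' v \<in> {\<Delta>, \<Delta> + 1})
           \<and> max_codegree V E' \<le> max (max_codegree V E) 1"
proof -
  define c where "c = max (max_codegree V E) 1"
  have fin: "finite V" using assms(3) unfolding sgraph_def by auto
  have D1: "\<Delta> \<ge> 1" using assms(1) by simp
  have c1: "c \<ge> 1" unfolding c_def by simp
  have degE: "degree E x \<le> \<Delta>" if "x \<in> V" for x
  proof -
    have "degree E x \<le> max_degree V E" unfolding max_degree_def
      using fin that by (intro Max_ge) auto
    then show ?thesis using assms(5) by simp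
  qed
  have codE: "card (nbhd E x \<inter> nbhd E y) \<le> c" if "x \<in> V" "y \<in> V" "x \<noteq> y" for x y
  proof -
    have "card (nbhd E x \<inter> nbhd E y) \<le> max_codegree V E" unfolding max_codegree_def
      using codeg_fin[OF fin, of E] that by (intro Max_ge) auto
    then show ?thesis unfolding c_def by simp
  qed
  have hv0: "hv V \<Delta> E = {}" using degE unfolding hv_def by fastforce
  have "inv V \<Delta> c E" unfolding inv_def using assms(3) degE codE hv0 by fastforce
  from main[OF D1 fin c1 _ this] assms(2,4) obtain E' where E':
    "E \<subseteq> E'" "sgraph V E'" "\<forall>x\<in>V. degree E' x \<in> {\<Delta>, \<Delta> + 1}"
    "\<forall>x\<in>V. \<forall>y\<in>V. x \<noteq> y \<longrightarrow> card (nbhd E' x \<inter> nbhd E' y) \<le> c" by auto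
  have "max_codegree V E' \<le> c" unfolding max_codegree_def
    using codeg_fin[OF fin, of E'] E'(4) c1 by (subst Max_le_iff) auto
  then show ?thesis using E' unfolding c_def by blast
qed

end
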